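(* Let $s=(s_1,\dots,s_m)$ be a sequence of positive integers and let $\alpha$ be a pattern whose largest value $k$ is internal (no copy of $k$ is the first or last letter of $\alpha$) and isolated (no two copies of $k$ are consecutive letters of $\alpha$). Then $\mathrm{Av}_s(\alpha)$ is a zig-zag language.
   Context: For a sequence $s=(s_1,\dots,s_m)$ of positive integers, an $s$-word is a word with exactly $s_i$ copies of $i$ for each $i\in[m]$; $S_s$ is the set of $s$-words. A pattern is a word $\alpha=\alpha_1\cdots\alpha_\ell$ over $[k]$ using every value of $[k]$. A word $w$ contains $\alpha$ if there are indices $i_1<\dots<i_\ell$ such that for all $a,b$: $w_{i_a}<w_{i_b}$ iff $\alpha_a<\alpha_b$, and $w_{i_a}=w_{i_b}$ iff $\alpha_a=\alpha_b$; otherwise $w$ avoids $\alpha$. $\mathrm{Av}_s(\alpha)$ is the set of $s$-words avoiding $\alpha$. Parent operation: $p(s)=(s_1,\dots,s_{m-1},s_m-1)$ if $s_m>1$ and $p(s)=(s_1,\dots,s_{m-1})$ if $s_m=1$; for an $s$-word $w$, $p(w)$ deletes the rightmost copy of $m$; $p(L)=\{p(w):w\in L\}$. Zig-zag language (recursive on $n=\sum s_i$): for the empty sequence the only zig-zag language is $\{\varepsilon\}$. For $n\ge1$, $L\subseteq S_s$ is zig-zag if $p(L)$ is a zig-zag language of $p(s)$-words and for every $w'\in p(L)$ both of the following lie in $L$: (a) $w'm$, and (b) $mw'$ if $s_m=1$, or, if $s_m>1$, the word obtained by inserting $m$ immediately next to the rightmost $m$ of $w'$. *)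

theory Defs
  imports Main
begin

text \<open>Sequences s = (s_1,...,s_m) are lists; s_i = s ! (i - 1). Words are lists of
  positive naturals.\<close>

definition swords :: "nat list \<Rightarrow> nat list set" where
  "swords s = {w. (\<forall>x\<in>set w. 1 \<le> x \<and> x \<le> length s) \<and>
                  (\<forall>i\<in>{1..length s}. count_list w i = s ! (i - 1))}"

definition is_pattern :: "nat list \<Rightarrow> bool" where
  "is_pattern \<alpha> = (\<alpha> \<noteq> [] \<and> set \<alpha> = {1..Max (set \<alpha>)})"

definition contains :: "nat list \<Rightarrow> nat list \<Rightarrow> bool" where
  "contains w \<alpha> = (\<exists>idx :: nat list. length idx = length \<alpha> \<and> sorted_wrt (<) idx \<and>
      (\<forall>j\<in>set idx. j < length w) \<and>
      (\<forall>a<length \<alpha>. \<forall>b<length \<alpha>.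
          (w ! (idx ! a) < w ! (idx ! b) \<longleftrightarrow> \<alpha> ! a < \<alpha> ! b) \<and>
          (w ! (idx ! a) = w ! (idx ! b) \<longleftrightarrow> \<alpha> ! a = \<alpha> ! b)))"

definition Av :: "nat list \<Rightarrow> nat list \<Rightarrow> nat list set" where
  "Av s \<alpha> = {w \<in> swords s. \<not> contains w \<alpha>}"

definition pseq :: "nat list \<Rightarrow> nat list" where
  "pseq s = (if last s > 1 then butlast s @ [last s - 1] else butlast s)"

definition pword :: "nat \<Rightarrow> nat list \<Rightarrow> nat list" where
  "pword m w = rev (remove1 m (rev w))"

fun dup_first :: "nat \<Rightarrow> nat list \<Rightarrow> nat list" where
  "dup_first m [] = []"
| "dup_first m (x # xs) = (if x = m then m # m # xs else x # dup_first m xs)"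

definition dup_last :: "nat \<Rightarrow> nat list \<Rightarrow> nat list" where
  "dup_last m w = rev (dup_first m (rev w))"

function zigzag :: "nat list \<Rightarrow> nat list set \<Rightarrow> bool" where
  "zigzag s L =
     (if s = [] then L = {[]}
      else L \<subseteq> swords s \<and>
           zigzag (pseq s) (pword (length s) ` L) \<and>
           (\<forall>w'\<in>pword (length s) ` L.
               w' @ [length s] \<in> L \<and>
               (if last s = 1 then length s # w' \<in> L
                else dup_last (length s) w' \<in> L)))"
  by pat_completeness auto
termination
proof (relation "measure (\<lambda>(s, L). sum_list s + length s)")
  fix s :: "nat list" and L :: "nat list set"
  assume "s \<noteq> []"
  then obtain t x where s: "s = t @ [x]" by (metis rev_exhaust)
  show "((pseq s, pword (length s) ` L), s, L) \<in> measure (\<lambda>(s, L). sum_list s + length s)"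
    by (auto simp: s pseq_def)
qed auto

end

theory Submission
  imports Defs
begin

definition occ :: "nat list \<Rightarrow> nat list \<Rightarrow> nat list \<Rightarrow> bool" where
  "occ w \<alpha> idx = (length idx = length \<alpha> \<and> sorted_wrt (<) idx \<and>
      (\<forall>j\<in>set idx. j < length w) \<and>
      (\<forall>a<length \<alpha>. \<forall>b<length \<alpha>.
          (w ! (idx ! a) < w ! (idx ! b) \<longleftrightarrow> \<alpha> ! a < \<alpha> ! b) \<and>
          (w ! (idx ! a) = w ! (idx ! b) \<longleftrightarrow> \<alpha> ! a = \<alpha> ! b)))"

lemma contains_occ: "contains w \<alpha> = (\<exists>idx. occ w \<alpha> idx)"
  unfolding contains_def occ_def by blast

lemma occ_eq: "occ w \<alpha> idx \<Longrightarrow> a < length \<alpha> \<Longrightarrow> b < length \<alpha> \<Longrightarrow>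
   (w ! (idx ! a) = w ! (idx ! b)) = (\<alpha> ! a = \<alpha> ! b)"
  unfolding occ_def by blast

lemma ins_contains:
  assumes "contains (xs @ ys) \<alpha>" shows "contains (xs @ y # ys) \<alpha>"
proof -
  obtain idx where O: "occ (xs @ ys) \<alpha> idx" using assms contains_occ by blast
  define f where "f i = (if i < length xs then i else Suc i)" for i
  have fv: "(xs @ y # ys) ! f i = (xs @ ys) ! i" for i
    by (auto simp: f_def nth_append Suc_diff_le)
  have "occ (xs @ y # ys) \<alpha> (map f idx)"
    using O unfolding occ_def
    apply (intro conjI)
       apply simp
      apply (simp add: sorted_wrt_map)
      apply (erule conjE)+
      apply (erule sorted_wrt_mono_rel[rotated])
      apply (auto simp: f_def)[1]
     apply (auto simp: f_def)[1]
    apply (simp add: fv)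
    done
  then show ?thesis using contains_occ by blast
qed

lemma del_contains:
  assumes "occ (xs @ y # ys) \<alpha> idx" "length xs \<notin> set idx"
  shows "contains (xs @ ys) \<alpha>"
proof -
  define f where "f i = (if i < length xs then i else i - 1)" for i
  have fv: "i \<noteq> length xs \<Longrightarrow> (xs @ ys) ! f i = (xs @ y # ys) ! i" for i
  proof (cases "i < length xs")
    case True then show ?thesis by (simp add: f_def nth_append)
  next
    case False
    assume "i \<noteq> length xs"
    with False have "length xs < i" by simp
    then obtain k where k: "i = Suc (length xs + k)" using less_imp_Suc_add by blast
    then show ?thesis by (simp add: f_def nth_append)
  qed
  have O: "length idx = length \<alpha>" "sorted_wrt (<) idx" "\<forall>j\<in>set idx. j < length (xs @ y # ys)"
    "\<forall>a<length \<alpha>. \<forall>b<length \<alpha>.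
          ((xs @ y # ys) ! (idx ! a) < (xs @ y # ys) ! (idx ! b) \<longleftrightarrow> \<alpha> ! a < \<alpha> ! b) \<and>
          ((xs @ y # ys) ! (idx ! a) = (xs @ y # ys) ! (idx ! b) \<longleftrightarrow> \<alpha> ! a = \<alpha> ! b)"
    using assms(1) unfolding occ_def by blast+
  have S: "sorted_wrt (<) (map f idx)"
  proof -
    have fm: "f x < f y" if "x \<in> set idx" "y \<in> set idx" "x < y" for x y
    proof -
      have "x \<noteq> length xs" "y \<noteq> length xs" using assms(2) that by auto
      then show ?thesis using that(3) by (auto simp: f_def)
    qed
    show ?thesis unfolding sorted_wrt_map by (rule sorted_wrt_mono_rel[OF _ O(2)]) (rule fm)
  qed
  have B: "\<forall>j\<in>set (map f idx). j < length (xs @ ys)"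
  proof
    fix j assume "j \<in> set (map f idx)"
    then obtain x where x: "x \<in> set idx" "j = f x" by auto
    have "x \<noteq> length xs" "x < length (xs @ y # ys)" using assms(2) x O(3) by auto
    then show "j < length (xs @ ys)" using x by (auto simp: f_def)
  qed
  have fv2: "a < length \<alpha> \<Longrightarrow> (xs @ ys) ! (map f idx ! a) = (xs @ y # ys) ! (idx ! a)" for a
  proof -
    assume a: "a < length \<alpha>"
    then have "idx ! a \<in> set idx" using O(1) by simp
    then have "idx ! a \<noteq> length xs" using assms(2) by auto
    then show ?thesis using fv a O(1) by simp
  qed
  have V: "\<forall>a<length \<alpha>. \<forall>b<length \<alpha>.
          ((xs @ ys) ! (map f idx ! a) < (xs @ ys) ! (map f idx ! b) \<longleftrightarrow> \<alpha> ! a < \<alpha> ! b) \<and>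
          ((xs @ ys) ! (map f idx ! a) = (xs @ ys) ! (map f idx ! b) \<longleftrightarrow> \<alpha> ! a = \<alpha> ! b)"
  proof (intro allI impI)
    fix a b assume ab: "a < length \<alpha>" "b < length \<alpha>"
    then show "((xs @ ys) ! (map f idx ! a) < (xs @ ys) ! (map f idx ! b) \<longleftrightarrow> \<alpha> ! a < \<alpha> ! b) \<and>
          ((xs @ ys) ! (map f idx ! a) = (xs @ ys) ! (map f idx ! b) \<longleftrightarrow> \<alpha> ! a = \<alpha> ! b)"
      unfolding fv2[OF ab(1)] fv2[OF ab(2)] using O(4) ab by blast
  qed
  have "occ (xs @ ys) \<alpha> (map f idx)"
    unfolding occ_def using O(1) S B V by simp
  then show ?thesis using contains_occ by blast
qed

lemma max_val:
  assumes O: "occ w \<alpha> idx" and a: "a < length \<alpha>" and M: "\<forall>x\<in>set w. x \<le> w ! (idx ! a)"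
  shows "\<alpha> ! a = Max (set \<alpha>)"
proof (rule Max_eqI[symmetric])
  show "finite (set \<alpha>)" by simp
  show "\<alpha> ! a \<in> set \<alpha>" using a by simp
  fix y assume "y \<in> set \<alpha>"
  then obtain b where b: "b < length \<alpha>" "y = \<alpha> ! b" by (auto simp: in_set_conv_nth)
  have "idx ! b \<in> set idx" using O b unfolding occ_def by auto
  then have "idx ! b < length w" using O unfolding occ_def by auto
  then have "w ! (idx ! b) \<le> w ! (idx ! a)" using M by auto
  then show "y \<le> \<alpha> ! a" using O a b unfolding occ_def by (meson not_le)
qed


lemma av_snoc:
  assumes "\<not> contains w' \<alpha>" "\<forall>x\<in>set w'. x \<le> m"
    and A3: "\<forall>i<length \<alpha>. \<alpha> ! i = Max (set \<alpha>) \<longrightarrow> 0 < i \<and> i + 1 < length \<alpha>"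
  shows "\<not> contains (w' @ [m]) \<alpha>"
proof
  assume "contains (w' @ [m]) \<alpha>"
  then obtain idx where O: "occ (w' @ m # []) \<alpha> idx" using contains_occ by auto
  show False
  proof (cases "length w' \<in> set idx")
    case False
    then show ?thesis using del_contains[OF O] assms(1) by simp
  next
    case True
    then obtain a where a: "a < length idx" "idx ! a = length w'" by (auto simp: in_set_conv_nth)
    have L: "length idx = length \<alpha>" using O occ_def by auto
    have "\<alpha> ! a = Max (set \<alpha>)" using max_val[OF O] a L assms(2) by auto
    then have "a + 1 < length \<alpha>" using A3 a L by auto
    then have "idx ! a < idx ! (a+1)" using O L sorted_wrt_nth_less unfolding occ_def by fastforce
    moreover have "idx ! (a+1) < length (w' @ [m])" using O L \<open>a + 1 < length \<alpha>\<close> unfolding occ_def by auto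
    ultimately show False using a by simp
  qed
qed

lemma av_cons:
  assumes "\<not> contains w' \<alpha>" "\<forall>x\<in>set w'. x \<le> m"
    and A3: "\<forall>i<length \<alpha>. \<alpha> ! i = Max (set \<alpha>) \<longrightarrow> 0 < i \<and> i + 1 < length \<alpha>"
  shows "\<not> contains (m # w') \<alpha>"
proof
  assume "contains (m # w') \<alpha>"
  then obtain idx where O: "occ ([] @ m # w') \<alpha> idx" using contains_occ by auto
  show False
  proof (cases "0 \<in> set idx")
    case False
    then show ?thesis using del_contains[OF O] assms(1) by simp
  next
    case True
    then obtain a where a: "a < length idx" "idx ! a = 0" by (auto simp: in_set_conv_nth)
    have L: "length idx = length \<alpha>" using O occ_def by auto
    have "\<alpha> ! a = Max (set \<alpha>)" using max_val[OF O] a L assms(2) by auto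
    then have "0 < a" using A3 a L by auto
    then have "idx ! (a - 1) < idx ! a" using O L a sorted_wrt_nth_less unfolding occ_def
      by (metis diff_less zero_less_one)
    then show False using a by simp
  qed
qed

lemma av_dup:
  assumes "\<not> contains (xs @ m # ys) \<alpha>" "\<forall>x\<in>set (xs @ m # ys). x \<le> m"
    and A4: "\<forall>i. i + 1 < length \<alpha> \<longrightarrow> \<not> (\<alpha> ! i = Max (set \<alpha>) \<and> \<alpha> ! (i + 1) = Max (set \<alpha>))"
  shows "\<not> contains (xs @ m # m # ys) \<alpha>"
proof
  assume "contains (xs @ m # m # ys) \<alpha>"
  then obtain idx where O: "occ (xs @ m # m # ys) \<alpha> idx" using contains_occ by auto
  have O2: "occ ((xs @ [m]) @ m # ys) \<alpha> idx" using O by simp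
  show False
  proof (cases "length xs \<in> set idx \<and> Suc (length xs) \<in> set idx")
    case False
    then have "length xs \<notin> set idx \<or> Suc (length xs) \<notin> set idx" by simp
    then show ?thesis
    proof
      assume "length xs \<notin> set idx"
      then show False using del_contains[OF O] assms(1) by simp
    next
      assume "Suc (length xs) \<notin> set idx"
      then show False using del_contains[OF O2] assms(1) by simp
    qed
  next
    case True
    then obtain a b where a: "a < length idx" "idx ! a = length xs"
      and b: "b < length idx" "idx ! b = Suc (length xs)" by (auto simp: in_set_conv_nth)
    have L: "length idx = length \<alpha>" using O occ_def by auto
    have S: "sorted_wrt (<) idx" using O occ_def by auto
    have "a < b"
    proof (rule ccontr)
      assume "\<not> a < b"
      then have "b < a \<or> b = a" by auto
      then show False using sorted_wrt_nth_less[OF S, of b a] a b by auto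
    qed
    have "b = a + 1"
    proof (rule ccontr)
      assume "b \<noteq> a + 1"
      then have "a + 1 < b" using \<open>a < b\<close> by auto
      then have "idx ! a < idx ! (a+1)" "idx ! (a+1) < idx ! b"
        using sorted_wrt_nth_less[OF S, of a "a+1"] sorted_wrt_nth_less[OF S, of "a+1" b] b by auto
      then show False using a b by simp
    qed
    have W: "(xs @ m # m # ys) ! (idx ! a) = m" "(xs @ m # m # ys) ! (idx ! b) = m"
      using a b by (auto simp: nth_append)
    have "\<alpha> ! a = Max (set \<alpha>)" using max_val[OF O] a L assms(2) W by auto
    moreover have "\<alpha> ! b = \<alpha> ! a" using occ_eq[OF O, of a b] a b L W by simp
    ultimately show False using A4 \<open>b = a + 1\<close> b L by auto
  qed
qed

lemma pword_split:
  assumes "m \<in> set w"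
  obtains xs ys where "w = xs @ m # ys" "m \<notin> set ys" "pword m w = xs @ ys"
proof -
  obtain r1 r2 where R: "rev w = r1 @ m # r2" "m \<notin> set r1"
    using split_list_first[of m "rev w"] assms by auto
  have "w = rev r2 @ m # rev r1" using R(1) by (metis rev_append rev_rev_ident rev.simps append.assoc append_Cons append_Nil)
  moreover have "pword m w = rev r2 @ rev r1"
    unfolding pword_def R(1) using R(2) by (simp add: remove1_append)
  ultimately show ?thesis using that R(2) by auto
qed

lemma pword_contains:
  assumes "contains (pword m w) \<alpha>" shows "contains w \<alpha>"
proof (cases "m \<in> set w")
  case True
  then obtain xs ys where "w = xs @ m # ys" "pword m w = xs @ ys" by (rule pword_split)
  then show ?thesis using assms ins_contains by metis
next
  case False
  then have "pword m w = w" unfolding pword_def by (simp add: remove1_idem)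
  then show ?thesis using assms by simp
qed

lemma dup_first_split: "m \<notin> set a \<Longrightarrow> dup_first m (a @ m # b) = a @ m # m # b"
  by (induction a) auto

lemma dup_last_split:
  assumes "m \<in> set w"
  obtains xs ys where "w = xs @ m # ys" "dup_last m w = xs @ m # m # ys"
proof -
  obtain r1 r2 where R: "rev w = r1 @ m # r2" "m \<notin> set r1"
    using split_list_first[of m "rev w"] assms by auto
  have "w = rev r2 @ m # rev r1" using R(1) by (metis rev_append rev_rev_ident rev.simps append.assoc append_Cons append_Nil)
  moreover have "dup_last m w = rev r2 @ m # m # rev r1"
    unfolding dup_last_def R(1) using R(2) by (simp add: dup_first_split)
  ultimately show ?thesis using that by auto
qed


definition cnt :: "nat list \<Rightarrow> nat \<Rightarrow> nat" where
  "cnt s x = (if 1 \<le> x \<and> x \<le> length s then s ! (x - 1) else 0)"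

lemma swords_iff:
  assumes "\<forall>y\<in>set s. 0 < y"
  shows "w \<in> swords s \<longleftrightarrow> (\<forall>x. count_list w x = cnt s x)"
proof
  assume w: "w \<in> swords s"
  show "\<forall>x. count_list w x = cnt s x"
  proof
    fix x
    show "count_list w x = cnt s x"
    proof (cases "1 \<le> x \<and> x \<le> length s")
      case True then show ?thesis using w unfolding swords_def cnt_def by auto
    next
      case False
      then have "x \<notin> set w" using w unfolding swords_def by auto
      then show ?thesis using False by (auto simp: cnt_def)
    qed
  qed
next
  assume c: "\<forall>x. count_list w x = cnt s x"
  have "1 \<le> x \<and> x \<le> length s" if "x \<in> set w" for x
  proof -
    have "count_list w x \<noteq> 0" using that count_list_0_iff by metis
    then show ?thesis using c unfolding cnt_def by (metis)
  qed
  moreover have "count_list w i = s ! (i - 1)" if "i \<in> {1..length s}" for i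
    using c that unfolding cnt_def by auto
  ultimately show "w \<in> swords s" unfolding swords_def by auto
qed

lemma swords_le: "w \<in> swords s \<Longrightarrow> x \<in> set w \<Longrightarrow> x \<le> length s"
  unfolding swords_def by auto

lemma pseq_pos:
  assumes "s \<noteq> []" "\<forall>y\<in>set s. 0 < y" shows "\<forall>y\<in>set (pseq s). 0 < y"
proof -
  obtain t l where s: "s = t @ [l]" using assms(1) by (metis rev_exhaust)
  show ?thesis using assms(2) unfolding s pseq_def by auto
qed

lemma pseq_len: "s \<noteq> [] \<Longrightarrow> length (pseq s) \<le> length s"
  unfolding pseq_def by auto

lemma cnt_last: "s \<noteq> [] \<Longrightarrow> cnt s (length s) = last s"
  unfolding cnt_def by (simp add: last_conv_nth Suc_leI)

lemma cnt_pseq: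
  assumes "s \<noteq> []" "0 < last s"
  shows "cnt (pseq s) x = (if x = length s then cnt s x - 1 else cnt s x)"
proof -
  obtain t l where s: "s = t @ [l]" using assms(1) by (metis rev_exhaust)
  have l: "0 < l" using assms(2) s by simp
  show ?thesis
  proof (cases "1 < l")
    case True
    then have p: "pseq (t @ [l]) = t @ [l - 1]" unfolding pseq_def by simp
    show ?thesis unfolding s p cnt_def
      by (auto simp: nth_append not_less_eq_eq le_Suc_eq)
  next
    case False
    then have l1: "l = 1" using l by auto
    have p: "pseq (t @ [1]) = t" unfolding pseq_def by auto
    show ?thesis unfolding s l1 p cnt_def
      by (auto simp: nth_append)
  qed
qed

lemma count_remove1: "count_list (remove1 m xs) x = (if x = m then count_list xs x - 1 else count_list xs x)"
  by (induction xs) auto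

lemma count_pword: "count_list (pword m w) x = (if x = m then count_list w x - 1 else count_list w x)"
  unfolding pword_def by (simp add: count_remove1)

lemma main_zz:
  assumes "\<forall>x\<in>set s. x > 0" and nonE: "\<alpha> \<noteq> []"
    and A3: "\<forall>i<length \<alpha>. \<alpha> ! i = Max (set \<alpha>) \<longrightarrow> 0 < i \<and> i + 1 < length \<alpha>"
    and A4: "\<forall>i. i + 1 < length \<alpha> \<longrightarrow> \<not> (\<alpha> ! i = Max (set \<alpha>) \<and> \<alpha> ! (i + 1) = Max (set \<alpha>))"
  shows "zigzag s (Av s \<alpha>)"
  using assms(1)
proof (induction "sum_list s + length s" arbitrary: s rule: less_induct)
  case less
  show ?case
  proof (cases "s = []")
    case True
    have "Av [] \<alpha> = {[]}"
    proof -
      have "w \<in> swords [] \<longleftrightarrow> w = []" for w unfolding swords_def by (cases w) auto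
      then have "swords [] = {[]}" by auto
      moreover have "\<not> contains [] \<alpha>"
      proof
        assume "contains [] \<alpha>"
        then obtain idx where O: "occ [] \<alpha> idx" using contains_occ by blast
        then have "idx \<noteq> []" using nonE unfolding occ_def by auto
        then have "idx ! 0 \<in> set idx" by simp
        then show False using O unfolding occ_def by auto
      qed
      ultimately show ?thesis unfolding Av_def by auto
    qed
    then show ?thesis using True by (subst zigzag.simps) simp
  next
    case False
    define m where "m = length s"
    have pos: "\<forall>x\<in>set s. x > 0" using less.prems .
    have lpos: "0 < last s" using pos False by simp
    have ppos: "\<forall>y\<in>set (pseq s). 0 < y" using pseq_pos[OF False pos] .
    have cp: "cnt (pseq s) x = (if x = m then cnt s x - 1 else cnt s x)" for x
      using cnt_pseq[OF False lpos] m_def by simp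
    have cm: "cnt s m = last s" using cnt_last[OF False] m_def by simp
    have dec: "sum_list (pseq s) + length (pseq s) < sum_list s + length s"
    proof -
      obtain t l where s: "s = t @ [l]" using False by (metis rev_exhaust)
      show ?thesis by (auto simp: s pseq_def)
    qed
    have IH: "zigzag (pseq s) (Av (pseq s) \<alpha>)" using less.hyps[OF dec ppos] .
    have le: "\<forall>x\<in>set w'. x \<le> m" if "w' \<in> Av (pseq s) \<alpha>" for w'
      using that swords_le pseq_len[OF False] unfolding Av_def m_def by fastforce
    have snoc: "w' @ [m] \<in> Av s \<alpha>" if w': "w' \<in> Av (pseq s) \<alpha>" for w'
    proof -
      have c: "count_list w' x = cnt (pseq s) x" for x
        using w' swords_iff[OF ppos] unfolding Av_def by auto
      have "w' @ [m] \<in> swords s"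
        unfolding swords_iff[OF pos] using c cp cm lpos by auto
      moreover have "\<not> contains (w' @ [m]) \<alpha>"
        using av_snoc[OF _ le[OF w'] A3] w' unfolding Av_def by auto
      ultimately show ?thesis unfolding Av_def by auto
    qed
    have img: "pword m ` Av s \<alpha> = Av (pseq s) \<alpha>"
    proof
      show "pword m ` Av s \<alpha> \<subseteq> Av (pseq s) \<alpha>"
      proof
        fix v assume "v \<in> pword m ` Av s \<alpha>"
        then obtain w where w: "w \<in> Av s \<alpha>" "v = pword m w" by auto
        have c: "count_list w x = cnt s x" for x
          using w swords_iff[OF pos] unfolding Av_def by auto
        have "v \<in> swords (pseq s)"
          unfolding swords_iff[OF ppos] w(2) count_pword using c cp by auto
        moreover have "\<not> contains v \<alpha>" using w pword_contains unfolding Av_def by blast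
        ultimately show "v \<in> Av (pseq s) \<alpha>" unfolding Av_def by auto
      qed
    next
      show "Av (pseq s) \<alpha> \<subseteq> pword m ` Av s \<alpha>"
      proof
        fix v assume v: "v \<in> Av (pseq s) \<alpha>"
        have "pword m (v @ [m]) = v" unfolding pword_def by simp
        then show "v \<in> pword m ` Av s \<alpha>" using snoc[OF v] by (metis image_eqI)
      qed
    qed
    have second: "(if last s = 1 then m # w' \<in> Av s \<alpha> else dup_last m w' \<in> Av s \<alpha>)"
      if w': "w' \<in> Av (pseq s) \<alpha>" for w'
    proof -
      have c: "count_list w' x = cnt (pseq s) x" for x
        using w' swords_iff[OF ppos] unfolding Av_def by auto
      have av: "\<not> contains w' \<alpha>" using w' unfolding Av_def by auto
      show ?thesis
      proof (cases "last s = 1")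
        case True
        have "m # w' \<in> swords s"
          unfolding swords_iff[OF pos] using c cp cm lpos by auto
        moreover have "\<not> contains (m # w') \<alpha>"
          using av_cons[OF av le[OF w'] A3] .
        ultimately show ?thesis using True unfolding Av_def by auto
      next
        case nt: False
        have "count_list w' m \<noteq> 0" using c cp cm lpos nt by auto
        then have "m \<in> set w'" using count_list_0_iff by metis
        then obtain xs ys where xy: "w' = xs @ m # ys" "dup_last m w' = xs @ m # m # ys"
          by (rule dup_last_split)
        define w2 where "w2 = xs @ m # m # ys"
        have "w2 \<in> swords s"
          unfolding swords_iff[OF pos]
        proof
          fix x
          have e: "count_list w2 x = count_list w' x + (if x = m then 1 else 0)"
            using xy(1) unfolding w2_def by simp
          have c2: "count_list w' x = (if x = m then cnt s x - 1 else cnt s x)"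
            unfolding c cp by (rule refl)
          show "count_list w2 x = cnt s x"
          proof (cases "x = m")
            case True
            have "count_list w' x = cnt s x - 1" using c2 True by simp
            moreover have "1 \<le> cnt s x" using cm lpos True by simp
            moreover have "count_list w2 x = count_list w' x + 1" using e True by simp
            ultimately show ?thesis by linarith
          next
            case False
            then show ?thesis using e c2 by simp
          qed
        qed
        then have "xs @ m # m # ys \<in> swords s" unfolding w2_def .
        moreover have "\<not> contains (xs @ m # m # ys) \<alpha>"
          using av_dup[OF _ _ A4] av le[OF w'] xy(1) by simp
        ultimately show ?thesis using nt xy(2) unfolding Av_def by auto
      qed
    qed
    have z1: "Av s \<alpha> \<subseteq> swords s" by (auto simp: Av_def)
    have z2: "zigzag (pseq s) (pword m ` Av s \<alpha>)" unfolding img by (rule IH)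
    have z3: "\<forall>w'\<in>pword m ` Av s \<alpha>. w' @ [m] \<in> Av s \<alpha> \<and>
               (if last s = 1 then m # w' \<in> Av s \<alpha> else dup_last m w' \<in> Av s \<alpha>)"
      unfolding img using snoc second by blast
    have "zigzag s (Av s \<alpha>) = (Av s \<alpha> \<subseteq> swords s \<and> zigzag (pseq s) (pword m ` Av s \<alpha>) \<and>
       (\<forall>w'\<in>pword m ` Av s \<alpha>. w' @ [m] \<in> Av s \<alpha> \<and>
               (if last s = 1 then m # w' \<in> Av s \<alpha> else dup_last m w' \<in> Av s \<alpha>)))"
      unfolding m_def by (subst zigzag.simps) (simp only: False if_False)
    then show ?thesis using z1 z2 z3 by blast
  qed
qed



theorem mainTheorem4:
  fixes s \<alpha> :: "nat list"
  assumes "\<forall>x\<in>set s. x > 0"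
    and "is_pattern \<alpha>"
    and "\<forall>i<length \<alpha>. \<alpha> ! i = Max (set \<alpha>) \<longrightarrow> 0 < i \<and> i + 1 < length \<alpha>"
    and "\<forall>i. i + 1 < length \<alpha> \<longrightarrow> \<not> (\<alpha> ! i = Max (set \<alpha>) \<and> \<alpha> ! (i + 1) = Max (set \<alpha>))"
  shows "zigzag s (Av s \<alpha>)"
  using main_zz[OF assms(1) _ assms(3) assms(4)] assms(2) unfolding is_pattern_def by blast

end
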